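(* Let $P=\{p_1,\ldots,p_n\}$ be $n$ points chosen uniformly and independently at random in $[0,1]^2$, and let $A$ be the area of the largest cell in the Voronoi diagram of $P$. Then for any constant $c>1$, $$\Pr\Bigl[A\ge 4c\,\frac{\log n}{n}\Bigr]\le \frac{1}{n^{2c-4}}.$$
   Context: All logarithms are natural. The unit square is considered with the torus topology: for $x,y\in[0,1]$ let $d_T(x,y)=\min(|x-y|,1-|x-y|)$, and for $p,q\in[0,1]^2$ let $d_T(p,q)=\sqrt{d_T(p_1,q_1)^2+d_T(p_2,q_2)^2}$. The Voronoi diagram of $P$ is computed with respect to this torus distance and restricted to $[0,1]^2$. *)

theory Defs
  imports "HOL-Probability.Probability"
begin

definition dT1 :: "real \<Rightarrow> real \<Rightarrow> real" where
  "dT1 x y = min \<bar>x - y\<bar> (1 - \<bar>x - y\<bar>)"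

definition dT :: "real \<times> real \<Rightarrow> real \<times> real \<Rightarrow> real" where
  "dT p q = sqrt ((dT1 (fst p) (fst q))\<^sup>2 + (dT1 (snd p) (snd q))\<^sup>2)"

definition unit_square :: "(real \<times> real) set" where
  "unit_square = {0..1} \<times> {0..1}"

definition voronoi_cell :: "nat \<Rightarrow> (nat \<Rightarrow> real \<times> real) \<Rightarrow> nat \<Rightarrow> (real \<times> real) set" where
  "voronoi_cell n P i = {x \<in> unit_square. \<forall>j<n. dT x (P i) \<le> dT x (P j)}"

definition largest_cell_area :: "nat \<Rightarrow> (nat \<Rightarrow> real \<times> real) \<Rightarrow> real" where
  "largest_cell_area n P = Max ((\<lambda>i. measure lborel (voronoi_cell n P i)) ` {..<n})"

definition random_points :: "nat \<Rightarrow> (nat \<Rightarrow> real \<times> real) measure" where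
  "random_points n = PiM {..<n} (\<lambda>_. uniform_measure lborel unit_square)"

end

theory Submission
  imports Defs
begin

lemma dT1_sym: "dT1 x y = dT1 y x"
  unfolding dT1_def by (simp add: abs_minus_commute)

lemma dT1_nonneg: "\<bar>x - y\<bar> \<le> 1 \<Longrightarrow> dT1 x y \<ge> 0"
  unfolding dT1_def by simp

lemma dT1_le_abs: "dT1 x y \<le> \<bar>x - y\<bar>"
  unfolding dT1_def by simp

lemma dT1_tri:
  assumes "x \<in> {0..1}" "y \<in> {0..1}" "z \<in> {0..1}"
  shows "dT1 x z \<le> dT1 x y + dT1 y z"
  using assms unfolding dT1_def min_def by (auto split: if_splits abs_split)

definition tor :: "real \<Rightarrow> real \<Rightarrow> real set" where
  "tor g w = {y \<in> {0..1}. dT1 y g < w}"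

lemma tor_sets[measurable]: "tor g w \<in> sets borel"
proof -
  have "continuous_on UNIV (\<lambda>y. dT1 y g)" unfolding dT1_def
    by (intro continuous_intros)
  hence "open {y. dT1 y g < w}"
    using open_Collect_less[of "\<lambda>y. dT1 y g" "\<lambda>_. w"] by (simp add: continuous_on_const)
  hence "{y. dT1 y g < w} \<in> sets borel" by auto
  moreover have "tor g w = {0..1} \<inter> {y. dT1 y g < w}" unfolding tor_def by auto
  ultimately show ?thesis by auto
qed

lemma measure_tor:
  assumes g: "0 \<le> g" "g \<le> 1" and w: "0 \<le> w" "w \<le> 1/2"
  shows "measure lborel (tor g w) = 2 * w"
proof (cases "g < w")
  case True
  have eq: "tor g w = {0..<g+w} \<union> {1+g-w<..1}"
    using g w True unfolding tor_def dT1_def min_def by (auto split: if_splits abs_split)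
  have "measure lborel ({0..<g+w} \<union> {1+g-w<..1}) = measure lborel {0..<g+w} + measure lborel {1+g-w<..1}"
    by (rule measure_Union) (use w g True in auto)
  thus ?thesis using eq g w True by simp
next
  case F1: False
  show ?thesis
  proof (cases "g > 1 - w")
    case True
    have eq: "tor g w = {0..<g+w-1} \<union> {g-w<..1}"
      using g w True unfolding tor_def dT1_def min_def by (auto split: if_splits abs_split)
    have "measure lborel ({0..<g+w-1} \<union> {g-w<..1}) = measure lborel {0..<g+w-1} + measure lborel {g-w<..1}"
      by (rule measure_Union) (use w g True in auto)
    thus ?thesis using eq g w True by simp
  next
    case False
    have eq: "tor g w = {g-w<..<g+w}"
      using g w False F1 unfolding tor_def dT1_def min_def by (auto split: if_splits abs_split)
    thus ?thesis using w by simp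
  qed
qed

lemma measure_times_real:
  fixes A B :: "real set"
  assumes "A \<in> sets borel" "B \<in> sets borel"
  shows "measure lborel (A \<times> B) = measure lborel A * measure lborel B"
proof -
  have "emeasure (lborel \<Otimes>\<^sub>M lborel) (A \<times> B) = emeasure lborel A * emeasure lborel B"
    using assms by (intro lborel.emeasure_pair_measure_Times) auto
  hence "emeasure lborel (A \<times> B) = emeasure lborel A * emeasure lborel B"
    by (simp add: lborel_prod)
  thus ?thesis unfolding measure_def by (simp add: enn2real_mult)
qed


lemma dT_sym: "dT x y = dT y x"
  unfolding dT_def by (simp add: dT1_sym)

lemma dT1_le_dT: "dT1 (fst x) (fst y) \<le> dT x y" "dT1 (snd x) (snd y) \<le> dT x y"
  unfolding dT_def by (auto intro: real_le_rsqrt simp: power2_eq_square abs_le_square_iff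
      intro!: order.trans[OF abs_ge_self real_le_rsqrt])

lemma measure_unit_square: "measure lborel unit_square = 1"
  unfolding unit_square_def by (subst measure_times_real) auto

lemma unit_square_sets[measurable]: "unit_square \<in> sets borel"
  unfolding unit_square_def by (intro borel_Times) auto

lemma measure_le_sub:
  assumes "C \<subseteq> B" "B \<in> sets borel" "emeasure lborel B < \<infinity>"
  shows "measure lborel C \<le> measure lborel B"
proof (cases "C \<in> sets lborel")
  case True
  thus ?thesis using assms by (intro measure_mono_fmeasurable) (auto simp: fmeasurable_def)
next
  case False
  thus ?thesis by (simp add: measure_notin_sets)
qed

lemma emeasure_tor_fin: "emeasure lborel (tor g w) < \<infinity>"
proof -
  have "emeasure lborel (tor g w) \<le> emeasure lborel {0..(1::real)}"
    by (intro emeasure_mono) (auto simp: tor_def)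
  thus ?thesis by (simp add: le_less_trans)
qed

lemma cell_small:
  assumes C: "C \<subseteq> unit_square" and p: "p \<in> unit_square" and r: "0 \<le> r" "r \<le> 1/2"
    and d: "\<forall>x\<in>C. dT x p < r"
  shows "measure lborel C \<le> 4 * r^2"
proof -
  have sub: "C \<subseteq> tor (fst p) r \<times> tor (snd p) r"
  proof
    fix x assume x: "x \<in> C"
    then show "x \<in> tor (fst p) r \<times> tor (snd p) r"
      using C d dT1_le_dT[of x p] unfolding tor_def unit_square_def
      by (cases x) (force simp: mem_Times_iff)
  qed
  have fin: "emeasure lborel (tor (fst p) r \<times> tor (snd p) r) < \<infinity>"
  proof -
    have "emeasure (lborel \<Otimes>\<^sub>M lborel) (tor (fst p) r \<times> tor (snd p) r)
        = emeasure lborel (tor (fst p) r) * emeasure lborel (tor (snd p) r)"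
      by (intro lborel.emeasure_pair_measure_Times) auto
    thus ?thesis using emeasure_tor_fin by (simp add: lborel_prod ennreal_mult_less_top)
  qed
  have "measure lborel C \<le> measure lborel (tor (fst p) r \<times> tor (snd p) r)"
    by (rule measure_le_sub[OF sub _ fin]) (intro borel_Times tor_sets)
  also have "\<dots> = (2*r) * (2*r)"
    using p r by (simp add: measure_times_real measure_tor unit_square_def mem_Times_iff)
  finally show ?thesis by (simp add: power2_eq_square)
qed


abbreviation "U \<equiv> uniform_measure lborel unit_square"

lemma emeasure_unit_square: "emeasure lborel unit_square = 1"
proof -
  have "emeasure (lborel \<Otimes>\<^sub>M lborel) ({0..1::real} \<times> {0..1::real})
        = emeasure lborel {0..1::real} * emeasure lborel {0..1::real}"
    by (intro lborel.emeasure_pair_measure_Times) auto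
  thus ?thesis by (simp add: lborel_prod unit_square_def)
qed

lemma U_prob: "prob_space U"
  by (rule prob_space_uniform_measure) (auto simp: emeasure_unit_square)

lemma fpps: "finite_product_prob_space (\<lambda>_. U) {..<(n::nat)}"
proof -
  have ps: "prob_space U" by (rule U_prob)
  then have sf: "sigma_finite_measure U" by (rule prob_space_imp_sigma_finite)
  show ?thesis
    unfolding finite_product_prob_space_def finite_product_sigma_finite_def product_prob_space_def
      product_sigma_finite_def finite_product_sigma_finite_axioms_def product_prob_space_axioms_def
    using ps sf by auto
qed

lemma sets_U: "sets U = sets borel" by simp
lemma space_U: "space U = UNIV" by simp

lemma measure_U: assumes "A \<in> sets borel" shows "measure U A = measure lborel (unit_square \<inter> A)"
proof -
  have "emeasure lborel unit_square = 1"
    by (rule emeasure_unit_square)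
  hence "emeasure lborel unit_square \<noteq> 0" "emeasure lborel unit_square \<noteq> \<infinity>" by auto
  thus ?thesis using assms measure_unit_square by simp
qed

lemma prob_PiE:
  assumes "\<And>i. i < n \<Longrightarrow> X i \<in> sets borel"
  shows "measure (random_points n) (PiE {..<n} X) = (\<Prod>i<n. measure U (X i))"
proof -
  interpret F: finite_product_prob_space "\<lambda>_. U" "{..<n}" by (rule fpps)
  show ?thesis unfolding random_points_def
    using F.prob_times[of X] assms by simp
qed

lemma PiE_sets: assumes "\<And>i. i < n \<Longrightarrow> X i \<in> sets borel"
  shows "PiE {..<n} X \<in> sets (random_points n)"
  unfolding random_points_def using assms by (intro sets_PiM_I_finite) auto

lemma prob_empty_Q:
  assumes "Q \<in> sets borel" "Q \<subseteq> unit_square"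
  shows "measure (random_points n) (PiE {..<n} (\<lambda>_. UNIV - Q)) = (1 - measure lborel Q)^n"
proof -
  have "measure U (UNIV - Q) = 1 - measure lborel Q"
  proof -
    have "measure U (UNIV - Q) = measure lborel (unit_square - Q)"
      using assms by (subst measure_U) (auto simp: Diff_eq Int_commute)
    also have "\<dots> = measure lborel unit_square - measure lborel Q"
      using assms by (intro measure_Diff) (auto simp: fmeasurable_def emeasure_unit_square
           intro!: fmeasurableI2[of unit_square])
    finally show ?thesis by (simp add: measure_unit_square)
  qed
  thus ?thesis using assms by (subst prob_PiE) auto
qed

lemma prob_bad:
  assumes "j < n"
  shows "measure (random_points n) (PiE {..<n} (\<lambda>i. if i = j then - unit_square else UNIV)) = 0"
proof -
  have "measure U (- unit_square) = 0"
    by (subst measure_U) auto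
  thus ?thesis using assms by (subst prob_PiE) (auto intro!: prod_zero)
qed


lemma arith_final:
  fixes n :: nat and c s u q :: real
  assumes n: "n \<ge> 7" and s: "s \<ge> 0" "s^2 \<le> 1/8" and cs: "2*c*ln (real n) = 4*(s^2)*real n"
    and u: "u = s - (1/real n + 1/real n^3)" "u \<ge> 0" and q: "q = 4*u^2"
  shows "(real n+1)^2 * (1-q)^n \<le> 1 / real n powr (2*c-4)"
proof -
  define d where "d = 1/real n + 1/real n^3"
  have np: "real n > 0" using n by simp
  have nd: "real n * d = 1 + 1/real n^2" using np unfolding d_def by (simp add: field_simps power2_eq_square power3_eq_cube)
  have q1: "q \<le> 1"
  proof -
    have "d \<ge> 0" using np unfolding d_def by simp
    hence "u \<le> s" using u unfolding d_def by linarith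
    hence "u^2 \<le> s^2" using u by (intro power_mono) auto
    thus ?thesis using q s by simp
  qed
  have "4* s^2 - q = 4*d*(2* s - d)" using q u unfolding d_def by (simp add: power2_eq_square algebra_simps)
  also have "\<dots> \<le> 8* s*d" using u s unfolding d_def by (simp add: algebra_simps)
  finally have k1: "real n * (4* s^2 - q) \<le> 8* s*(1 + 1/real n^2)"
    using np nd by (smt (verit) mult_left_mono mult.assoc mult.commute)
  have n2: "1/real n^2 \<le> 1/49"
  proof -
    have "(7::real)^2 \<le> real n^2" using n by (intro power_mono) auto
    thus ?thesis by (simp add: divide_simps)
  qed
  have "(8* s*(1 + 1/real n^2))^2 = 64 * s^2 * (1 + 1/real n^2)^2" by (simp add: power_mult_distrib)
  also have "\<dots> \<le> 64 * (1/8) * (1 + 1/49)^2"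
    using s n2 by (intro mult_mono power_mono) auto
  also have "\<dots> \<le> 3^2" by (simp add: power2_eq_square)
  finally have "8* s*(1 + 1/real n^2) \<le> 3" by (rule power2_le_imp_le) simp
  with k1 have k2: "real n * (4* s^2 - q) \<le> 3" by linarith
  have e3: "exp (real n * (4* s^2 - q)) \<le> 27"
  proof -
    have "exp (real n * (4* s^2 - q)) \<le> exp 3" using k2 by simp
    also have "exp (3::real) = exp 1 ^ 3" using exp_of_nat_mult[of 3 1] by simp
    also have "\<dots> \<le> 3^3" using exp_le by (intro power_mono) auto
    finally show ?thesis by simp
  qed
  have poly: "(real n+1)^2 * 27 \<le> real n^4"
  proof -
    have a1: "6*(real n+1) \<le> real n^2"
    proof -
      have "real n * 7 \<le> real n * real n" using n np by (intro mult_left_mono) auto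
      moreover have "real n \<ge> 7" using n by simp
      ultimately have "6*(real n+1) \<le> real n * real n" by (smt (verit))
      thus ?thesis by (simp add: power2_eq_square)
    qed
    have "(real n+1)^2 * 27 \<le> (real n+1)^2 * 36" by simp
    also have "\<dots> = (6*(real n+1))^2" by (simp add: power2_eq_square algebra_simps)
    also have "\<dots> \<le> (real n^2)^2" using a1 np by (intro power_mono) auto
    finally show ?thesis by (simp add: power_mult[symmetric])
  qed
  have "(1-q)^n \<le> exp (-q)^n"
    using q1 exp_ge_add_one_self[of "-q"] by (intro power_mono) auto
  also have "\<dots> = exp (- q * real n)" using exp_of_nat_mult[of n "-q"] by (simp add: mult.commute)
  also have "\<dots> = exp (-(2*c*ln n)) * exp (real n * (4* s^2 - q))"
    unfolding exp_add[symmetric] cs by (simp add: algebra_simps)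
  finally have k3: "(1-q)^n \<le> exp (-(2*c*ln n)) * exp (real n * (4* s^2 - q))" .
  have "(real n+1)^2 * (1-q)^n \<le> (real n+1)^2 * (exp (-(2*c*ln n)) * 27)"
    using k3 e3 by (intro mult_left_mono order.trans[OF k3] mult_left_mono) auto
  also have "\<dots> = ((real n+1)^2 * 27) * exp (-(2*c*ln n))" by simp
  also have "\<dots> \<le> real n^4 * exp (-(2*c*ln n))" using poly by (intro mult_right_mono) auto
  also have "\<dots> = 1 / real n powr (2*c-4)"
  proof -
    have "real n powr (2*c-4) = real n powr (2*c) / real n powr 4" by (rule powr_diff)
    also have "real n powr 4 = real n ^ 4" using powr_realpow[OF np, of 4] by simp
    also have "real n powr (2*c) = exp (2*c*ln n)" using np by (simp add: powr_def)
    finally show ?thesis using np by (simp add: exp_minus field_simps)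
  qed
  finally show ?thesis .
qed


lemma cell_le_1: "measure lborel (voronoi_cell n P i) \<le> 1"
proof -
  have "measure lborel (voronoi_cell n P i) \<le> measure lborel unit_square"
    by (rule measure_le_sub) (auto simp: voronoi_cell_def emeasure_unit_square)
  thus ?thesis by (simp add: measure_unit_square)
qed

lemma n_ge_7:
  fixes n :: nat
  assumes "n \<ge> 2" "8 * ln (real n) < real n"
  shows "n \<ge> 7"
proof (rule ccontr)
  assume "\<not> n \<ge> 7"
  hence "n = 2 \<or> n = 3 \<or> n = 4 \<or> n = 5 \<or> n = 6" using assms by auto
  moreover have "ln (1 / real n) \<le> 1 / real n - 1" using assms by (intro ln_le_minus_one) auto
  hence "1 - 1 / real n \<le> ln (real n)" using assms by (simp add: ln_div)
  ultimately show False using assms by auto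
qed

lemma bad_sets: "PiE {..<n} (\<lambda>i. if i = j then - unit_square else UNIV) \<in> sets (random_points n)"
  by (rule PiE_sets) (auto simp: borel_comp[OF unit_square_sets])

lemma grid_pt:
  fixes n :: nat and x :: "real \<times> real"
  assumes "n > 0" "x \<in> unit_square"
  defines "k \<equiv> nat \<lfloor>real n * fst x\<rfloor>" and "l \<equiv> nat \<lfloor>real n * snd x\<rfloor>"
  shows "k \<le> n" "l \<le> n" "0 \<le> real k / real n" "real k / real n \<le> 1"
    "0 \<le> real l / real n" "real l / real n \<le> 1"
    "dT1 (real k / real n) (fst x) < 1 / real n" "dT1 (real l / real n) (snd x) < 1 / real n"
proof -
  have np: "real n > 0" using assms by simp
  have fx: "0 \<le> fst x" "fst x \<le> 1" "0 \<le> snd x" "snd x \<le> 1"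
    using assms(2) unfolding unit_square_def by (auto simp: mem_Times_iff)
  have h: "nat \<lfloor>real n * z\<rfloor> \<le> n \<and> 0 \<le> real (nat \<lfloor>real n * z\<rfloor>) / real n \<and>
     real (nat \<lfloor>real n * z\<rfloor>) / real n \<le> 1 \<and> dT1 (real (nat \<lfloor>real n * z\<rfloor>) / real n) z < 1 / real n"
    if z: "0 \<le> z" "z \<le> 1" for z
  proof -
    have nz: "0 \<le> real n * z" "real n * z \<le> real n" using z np by (auto simp: mult_le_cancel_left1)
    have fl0: "\<lfloor>real n * z\<rfloor> \<ge> 0" using nz by simp
    have rk: "real (nat \<lfloor>real n * z\<rfloor>) = of_int \<lfloor>real n * z\<rfloor>" using fl0 by simp
    have f1: "of_int \<lfloor>real n * z\<rfloor> \<le> real n * z" "real n * z < of_int \<lfloor>real n * z\<rfloor> + 1"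
      by linarith+
    have kn: "nat \<lfloor>real n * z\<rfloor> \<le> n"
    proof -
      have "\<lfloor>real n * z\<rfloor> \<le> int n" using nz by linarith
      thus ?thesis by simp
    qed
    have g1: "real (nat \<lfloor>real n * z\<rfloor>) / real n \<le> z" using f1 rk np by (simp add: divide_simps mult.commute)
    have g2: "z - real (nat \<lfloor>real n * z\<rfloor>) / real n < 1 / real n"
    proof -
      have "z - real (nat \<lfloor>real n * z\<rfloor>) / real n = (real n * z - real (nat \<lfloor>real n * z\<rfloor>)) / real n"
        using np by (simp add: field_simps)
      also have "\<dots> < 1 / real n"
      proof -
        have "real n * z - real (nat \<lfloor>real n * z\<rfloor>) < 1" using f1(2) rk by linarith
        thus ?thesis using np by (intro divide_strict_right_mono)
      qed
      finally show ?thesis .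
    qed
    have g0: "0 \<le> real (nat \<lfloor>real n * z\<rfloor>) / real n" by simp
    have "dT1 (real (nat \<lfloor>real n * z\<rfloor>) / real n) z \<le> \<bar>real (nat \<lfloor>real n * z\<rfloor>) / real n - z\<bar>"
      by (rule dT1_le_abs)
    also have "\<dots> < 1 / real n" using g1 g2 by simp
    finally show ?thesis using kn g0 g1 z by auto
  qed
  show "k \<le> n" "0 \<le> real k / real n" "real k / real n \<le> 1" "dT1 (real k / real n) (fst x) < 1 / real n"
    using h[OF fx(1,2)] unfolding k_def by auto
  show "l \<le> n" "0 \<le> real l / real n" "real l / real n \<le> 1" "dT1 (real l / real n) (snd x) < 1 / real n"
    using h[OF fx(3,4)] unfolding l_def by auto
qed

lemma close_pt:
  assumes y: "y \<in> tor g1 u \<times> tor g2 u" and x: "x \<in> unit_square"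
    and g: "0 \<le> g1" "g1 \<le> 1" "0 \<le> g2" "g2 \<le> 1"
    and d: "dT1 g1 (fst x) < e" "dT1 g2 (snd x) < e"
  shows "dT y x < sqrt (2 * (u + e)^2)"
proof -
  have fx: "fst x \<in> {0..1}" "snd x \<in> {0..1}" using x unfolding unit_square_def by (auto simp: mem_Times_iff)
  have fy: "fst y \<in> {0..1}" "snd y \<in> {0..1}" "dT1 (fst y) g1 < u" "dT1 (snd y) g2 < u"
    using y unfolding tor_def by (auto simp: mem_Times_iff)
  have d1: "dT1 (fst y) (fst x) < u + e"
    using dT1_tri[of "fst y" g1 "fst x"] fx fy g d by simp
  have d2: "dT1 (snd y) (snd x) < u + e"
    using dT1_tri[of "snd y" g2 "snd x"] fx fy g d by simp
  have n1: "0 \<le> dT1 (fst y) (fst x)" "0 \<le> dT1 (snd y) (snd x)"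
    using fx fy by (auto intro!: dT1_nonneg simp: abs_le_iff)
  have "(dT1 (fst y) (fst x))^2 < (u+e)^2" using d1 n1 by (intro power_strict_mono) auto
  moreover have "(dT1 (snd y) (snd x))^2 < (u+e)^2" using d2 n1 by (intro power_strict_mono) auto
  ultimately have "(dT1 (fst y) (fst x))^2 + (dT1 (snd y) (snd x))^2 < 2 * (u+e)^2" by simp
  thus ?thesis unfolding dT_def by (simp add: real_sqrt_less_iff)
qed

theorem lemma3p1:
  fixes n :: nat and c :: real
  assumes "n \<ge> 1" and "c > 1"
  shows "\<exists>E \<in> sets (random_points n).
           {P \<in> space (random_points n). largest_cell_area n P \<ge> 4 * c * ln (real n) / real n} \<subseteq> E
         \<and> measure (random_points n) E \<le> 1 / real n powr (2 * c - 4)"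
proof -
  let ?M = "random_points n"
  interpret F: finite_product_prob_space "\<lambda>_. U" "{..<n}" by (rule fpps)
  have PS: "prob_space ?M" using F.prob_space_axioms unfolding random_points_def .
  have np: "real n > 0" using assms by simp
  define a where "a = 4 * c * ln (real n) / real n"
  show ?thesis
  proof (cases "real n powr (2 * c - 4) \<le> 1")
    case True
    have "measure ?M (space ?M) \<le> 1" using PS by (simp add: prob_space.prob_space)
    also have "1 \<le> 1 / real n powr (2 * c - 4)" using True np by (simp add: divide_simps)
    finally show ?thesis by (intro bexI[of _ "space ?M"]) auto
  next
    case big: False
    have n2: "n \<ge> 2"
    proof (rule ccontr)
      assume "\<not> n \<ge> 2" hence "n = 1" using assms by auto
      thus False using big by simp
    qed
    have c2: "c > 2"
    proof (rule ccontr)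
      assume "\<not> c > 2"
      hence "real n powr (2*c-4) \<le> real n powr 0" using n2 by (intro powr_mono) auto
      thus False using big np by simp
    qed
    have lnp: "ln (real n) > 0" using n2 by simp
    show ?thesis
    proof (cases "a > 1")
      case True
      have "{P \<in> space ?M. largest_cell_area n P \<ge> 4 * c * ln (real n) / real n} = {}"
      proof -
        have "largest_cell_area n P \<le> 1" for P
          unfolding largest_cell_area_def using assms cell_le_1 by (subst Max_le_iff) (auto simp: lessThan_empty_iff)
        hence "\<not> (4 * c * ln (real n) / real n \<le> largest_cell_area n P)" for P
          using True unfolding a_def by (smt (verit))
        thus ?thesis by auto
      qed
      thus ?thesis by (intro bexI[of _ "{}"]) auto
    next
      case False
      then have a1: "a \<le> 1" by simp
      have "8 * ln (real n) < 4 * c * ln (real n)" using c2 lnp by simp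
      also have "\<dots> \<le> real n" using a1 np unfolding a_def by (simp add: divide_simps)
      finally have n7: "n \<ge> 7" using n2 n_ge_7 by auto
      define s where "s = sqrt (a/8)"
      define t where "t = s - 1 / real n^3"
      define u where "u = t - 1 / real n"
      define r0 where "r0 = sqrt (2 * t^2)"
      define Q where "Q k l = tor (real k / real n) u \<times> tor (real l / real n) u" for k l :: nat
      define Bad where "Bad = (\<Union>j<n. PiE {..<n} (\<lambda>i. if i = j then - unit_square else UNIV))"
      define G where "G = (\<Union>kl\<in>{..n}\<times>{..n}. PiE {..<n} (\<lambda>_. UNIV - Q (fst kl) (snd kl)))"
      have a0: "a \<ge> 0" unfolding a_def using c2 lnp np by (intro divide_nonneg_pos mult_nonneg_nonneg) auto
      have s0: "s \<ge> 0" unfolding s_def using a0 by simp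
      have s2: "s^2 = a/8" using a0 by (simp add: s_def)
      have s18: "s^2 \<le> 1/8" using s2 a1 by simp
      have cs: "2*c*ln (real n) = 4*(s^2)*real n" using s2 np unfolding a_def by (simp add: field_simps)
      have n7r: "real n \<ge> 7" using n7 by simp
      have lnn: "ln (real n) \<ge> 6/7"
      proof -
        have "ln (1 / real n) \<le> 1 / real n - 1" using np by (intro ln_le_minus_one) auto
        hence "1 - 1 / real n \<le> ln (real n)" using np by (simp add: ln_div)
        moreover have "1 / real n \<le> 1/7" using n7r by (simp add: divide_simps)
        ultimately show ?thesis by linarith
      qed
      have dle: "1 / real n + 1 / real n^3 \<le> 2 / real n"
      proof -
        have "real n * 1 \<le> real n * real n" using n7r by (intro mult_left_mono) auto
        hence "real n * 1 \<le> real n * (real n * real n)" using n7r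
          by (smt (verit) mult_left_mono)
        hence "1 / real n^3 \<le> 1 / real n"
          using n7r np by (intro divide_left_mono) (auto simp: power3_eq_cube)
        thus ?thesis by simp
      qed
      have sd: "s \<ge> 1 / real n + 1 / real n^3"
      proof -
        have "(2 / real n)^2 \<le> a/8"
        proof -
          have "7 * (6/7) \<le> real n * ln (real n)" using lnn n7r
            by (intro mult_mono) auto
          hence "4 \<le> real n * ln (real n)" by simp
          hence "4 / real n^2 \<le> ln (real n) / real n" using np
            by (simp add: divide_simps power2_eq_square) (smt (verit) mult.commute)
          also have "\<dots> \<le> a/8" unfolding a_def using c2 lnp np by (simp add: divide_simps)
          finally show ?thesis by (simp add: power_divide)
        qed
        hence "2 / real n \<le> s" unfolding s_def by (intro real_le_rsqrt)
        thus ?thesis using dle by linarith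
      qed
      have u0: "u \<ge> 0" using sd unfolding u_def t_def by simp
      have "1 / real n > 0" using np by simp
      hence tpos: "t > 0" using u0 unfolding u_def by linarith
      have ts: "t < s" using np unfolding t_def by simp
      have hh: "(1/2::real)^2 = 1/4" by (simp add: power2_eq_square)
      have "s^2 \<le> (1/2)^2" using s18 hh by linarith
      hence sh: "s \<le> 1/2" by (rule power2_le_imp_le) simp
      have "1 / real n \<ge> 0" by simp
      hence uh: "u \<le> 1/2" using ts sh unfolding u_def by linarith
      have t2: "t^2 < s^2" using tpos ts by (intro power_strict_mono) auto
      have r00: "r0 \<ge> 0" unfolding r0_def by simp
      have r0sq: "r0^2 = 2 * t^2" unfolding r0_def by simp
      have r0a: "4 * r0^2 < a" using r0sq t2 s2 by simp
      have "r0^2 \<le> (1/2)^2" using r0sq t2 s18 hh by linarith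
      hence r0h: "r0 \<le> 1/2" by (rule power2_le_imp_le) simp
      have Qsets: "Q k l \<in> sets borel" for k l unfolding Q_def by (intro borel_Times tor_sets)
      have Qsub: "Q k l \<subseteq> unit_square" for k l unfolding Q_def tor_def unit_square_def by auto
      have Qmeas: "measure lborel (Q k l) = 4 * u^2" if "k \<le> n" "l \<le> n" for k l
      proof -
        have g: "0 \<le> real k / real n" "real k / real n \<le> 1" "0 \<le> real l / real n" "real l / real n \<le> 1"
          using that np by (auto simp: divide_simps)
        show ?thesis unfolding Q_def using g u0 uh
          by (simp add: measure_times_real measure_tor power2_eq_square)
      qed
      have Badsets: "Bad \<in> sets ?M" unfolding Bad_def
        by (intro sets.countable_UN') (auto intro!: bad_sets)
      have Qpie: "PiE {..<n} (\<lambda>_. UNIV - Q k l) \<in> sets ?M" for k l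
      proof (rule PiE_sets)
        have "- Q k l \<in> sets borel" by (rule borel_comp[OF Qsets])
        thus "UNIV - Q k l \<in> sets borel" by (simp add: Compl_eq_Diff_UNIV)
      qed
      have Gsets: "G \<in> sets ?M" unfolding G_def
        by (intro sets.countable_UN') (auto intro: Qpie)
      have mBad: "measure ?M Bad \<le> 0"
      proof -
        have "measure ?M Bad \<le> (\<Sum>j<n. measure ?M (PiE {..<n} (\<lambda>i. if i = j then - unit_square else UNIV)))"
          unfolding Bad_def by (intro measure_UNION_le) (auto intro!: bad_sets)
        also have "\<dots> = 0" by (simp add: prob_bad)
        finally show ?thesis .
      qed
      have mG: "measure ?M G \<le> (real n + 1)^2 * (1 - 4*u^2)^n"
      proof -
        have "measure ?M G \<le> (\<Sum>kl\<in>{..n}\<times>{..n}. measure ?M (PiE {..<n} (\<lambda>_. UNIV - Q (fst kl) (snd kl))))"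
          unfolding G_def by (intro measure_UNION_le) (auto intro: Qpie)
        also have "\<dots> = (\<Sum>kl\<in>{..n}\<times>{..n}. (1 - 4*u^2)^n)"
          by (intro sum.cong refl) (auto simp: prob_empty_Q Qsets Qsub Qmeas)
        also have "\<dots> = (real n + 1)^2 * (1 - 4*u^2)^n" by (simp add: power2_eq_square algebra_simps)
        finally show ?thesis .
      qed
      have incl: "{P \<in> space ?M. largest_cell_area n P \<ge> 4 * c * ln (real n) / real n} \<subseteq> Bad \<union> G"
      proof (intro subsetI, elim CollectE conjE)
        fix P assume Psp: "P \<in> space ?M" and ge: "4 * c * ln (real n) / real n \<le> largest_cell_area n P"
        have Pext: "P \<in> extensional {..<n}" using Psp unfolding random_points_def space_PiM by (auto simp: PiE_iff)
        show "P \<in> Bad \<union> G"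
        proof (cases "\<exists>j<n. P j \<notin> unit_square")
          case True
          then obtain j where j: "j < n" "P j \<notin> unit_square" by auto
          have "P \<in> PiE {..<n} (\<lambda>i. if i = j then - unit_square else UNIV)"
            using Pext j by (auto simp: PiE_iff)
          thus ?thesis unfolding Bad_def using j by blast
        next
          case False
          hence Pin: "\<And>j. j < n \<Longrightarrow> P j \<in> unit_square" by auto
          have "largest_cell_area n P \<in> (\<lambda>i. measure lborel (voronoi_cell n P i)) ` {..<n}"
            unfolding largest_cell_area_def using assms by (intro Max_in) (auto simp: lessThan_empty_iff)
          then obtain i where i: "i < n" and mi: "a \<le> measure lborel (voronoi_cell n P i)"
            using ge unfolding a_def by auto
          have "\<exists>x\<in>voronoi_cell n P i. r0 \<le> dT x (P i)"
          proof (rule ccontr)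
            assume "\<not> (\<exists>x\<in>voronoi_cell n P i. r0 \<le> dT x (P i))"
            hence "\<forall>x\<in>voronoi_cell n P i. dT x (P i) < r0" by (auto simp: not_le)
            hence "measure lborel (voronoi_cell n P i) \<le> 4 * r0^2"
              using Pin[OF i] r00 r0h by (intro cell_small) (auto simp: voronoi_cell_def)
            thus False using mi r0a by simp
          qed
          then obtain x where xc: "x \<in> voronoi_cell n P i" and dx: "r0 \<le> dT x (P i)" by blast
          have xu: "x \<in> unit_square" and xmin: "\<And>j. j < n \<Longrightarrow> dT x (P i) \<le> dT x (P j)"
            using xc unfolding voronoi_cell_def by auto
          define k where "k = nat \<lfloor>real n * fst x\<rfloor>"
          define l where "l = nat \<lfloor>real n * snd x\<rfloor>"
          note gp = grid_pt[OF _ xu, of n, folded k_def l_def]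
          have "P \<in> PiE {..<n} (\<lambda>_. UNIV - Q k l)"
          proof -
            have "P j \<notin> Q k l" if j: "j < n" for j
            proof
              assume "P j \<in> Q k l"
              hence "dT (P j) x < sqrt (2 * (u + 1 / real n)^2)"
                unfolding Q_def using gp np xu by (intro close_pt) auto
              also have "sqrt (2 * (u + 1 / real n)^2) = r0" unfolding r0_def u_def by simp
              also have "r0 \<le> dT x (P j)" using dx xmin[OF j] by simp
              finally show False by (simp add: dT_sym)
            qed
            thus ?thesis using Pext by (auto simp: PiE_iff)
          qed
          moreover have "(k, l) \<in> {..n} \<times> {..n}" using gp np by auto
          ultimately show ?thesis unfolding G_def by force
        qed
      qed
      have "measure ?M (Bad \<union> G) \<le> measure ?M Bad + measure ?M G"
        using Badsets Gsets by (rule measure_Un_le)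
      also have "\<dots> \<le> (real n + 1)^2 * (1 - 4*u^2)^n" using mBad mG by simp
      also have "\<dots> \<le> 1 / real n powr (2 * c - 4)"
        by (rule arith_final[OF n7 s0 s18 cs _ u0]) (simp_all add: u_def t_def)
      finally show ?thesis using incl Badsets Gsets by (intro bexI[of _ "Bad \<union> G"]) auto
    qed
  qed
qed

end
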